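(* Let $X$ be an AM-space such that the closed unit ball $\mathbf B(X)$ is the norm closed solid convex hull of finitely many of its elements. Then $X$ is lattice isometric to $C(K)$ for some compact Hausdorff space $K$.
   Context: An AM-space is a Banach lattice whose norm satisfies $\|x\vee y\|=\max(\|x\|,\|y\|)$ for all $x,y\ge0$. The solid convex hull of $S$ is the smallest convex set $D\supseteq S$ such that $x\in X$, $z\in D$, $|x|\le|z|$ imply $x\in D$. *)

theory Defs
  imports "HOL-Analysis.Analysis"
begin

text \<open>Real Banach lattices are modelled on a type of class
  banach + ordered_real_vector + lattice (a real vector lattice with a complete norm),
  together with the lattice-norm axiom stated by banach_lattice below.\<close>

definition labs :: "'a::{ordered_real_vector, lattice} \<Rightarrow> 'a" where
  "labs x = sup x (- x)"

definition banach_lattice :: "'a::{banach, ordered_real_vector, lattice} itself \<Rightarrow> bool" where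
  "banach_lattice _ \<longleftrightarrow> (\<forall>x y :: 'a. labs x \<le> labs y \<longrightarrow> norm x \<le> norm y)"

definition AM_space :: "'a::{banach, ordered_real_vector, lattice} itself \<Rightarrow> bool" where
  "AM_space T \<longleftrightarrow> banach_lattice T \<and>
     (\<forall>x y :: 'a. 0 \<le> x \<longrightarrow> 0 \<le> y \<longrightarrow> norm (sup x y) = max (norm x) (norm y))"

definition solid :: "'a::{ordered_real_vector, lattice} set \<Rightarrow> bool" where
  "solid D \<longleftrightarrow> (\<forall>x z. z \<in> D \<longrightarrow> labs x \<le> labs z \<longrightarrow> x \<in> D)"

definition solid_convex_hull :: "'a::{real_vector, ordered_real_vector, lattice} set \<Rightarrow> 'a set" where
  "solid_convex_hull S = \<Inter> {D. S \<subseteq> D \<and> convex D \<and> solid D}"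

text \<open>The space C(K) of continuous real functions on a topological space K, represented
  extensionally (functions vanishing outside the carrier), with the sup norm.\<close>
definition Cfun :: "'b topology \<Rightarrow> ('b \<Rightarrow> real) set" where
  "Cfun K = {f. continuous_map K euclideanreal f \<and> (\<forall>t. t \<notin> topspace K \<longrightarrow> f t = 0)}"

definition sup_norm :: "'b topology \<Rightarrow> ('b \<Rightarrow> real) \<Rightarrow> real" where
  "sup_norm K f = (if topspace K = {} then 0 else (SUP t\<in>topspace K. \<bar>f t\<bar>))"

definition lattice_isometry_onto_CK ::
    "('a::{real_normed_vector, ordered_real_vector, lattice} \<Rightarrow> ('b \<Rightarrow> real)) \<Rightarrow> 'b topology \<Rightarrow> bool" where
  "lattice_isometry_onto_CK \<Phi> K \<longleftrightarrow>
     bij_betw \<Phi> UNIV (Cfun K) \<and>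
     (\<forall>x y. \<Phi> (x + y) = (\<lambda>t. \<Phi> x t + \<Phi> y t)) \<and>
     (\<forall>c x. \<Phi> (c *\<^sub>R x) = (\<lambda>t. c * \<Phi> x t)) \<and>
     (\<forall>x y. \<Phi> (sup x y) = (\<lambda>t. max (\<Phi> x t) (\<Phi> y t))) \<and>
     (\<forall>x. sup_norm K (\<Phi> x) = norm x)"

end

theory Submission
  imports Defs
begin




lemma labs_ge: "(x::'a::{ordered_real_vector, lattice}) \<le> labs x" "- x \<le> labs x"
  by (auto simp: labs_def)

lemma labs_le_iff: "labs (x::'a::{ordered_real_vector, lattice}) \<le> y \<longleftrightarrow> x \<le> y \<and> - x \<le> y"
  by (simp add: labs_def)

lemma labs_nonneg: "0 \<le> labs (x::'a::{ordered_real_vector, lattice})"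
proof -
  have "x + - x \<le> labs x + labs x" using labs_ge by (rule add_mono)
  then have "0 \<le> labs x + labs x" by simp
  then have "0 \<le> (1/2::real) *\<^sub>R (labs x + labs x)" using scaleR_left_mono[of 0 "labs x + labs x" "1/2"] by simp
  also have "(1/2::real) *\<^sub>R (labs x + labs x) = labs x" by (simp add: scaleR_2[symmetric])
  finally show ?thesis .
qed

lemma labs_neg[simp]: "labs (- (x::'a::{ordered_real_vector, lattice})) = labs x"
  by (simp add: labs_def sup_commute)

lemma labs_pos: "0 \<le> (x::'a::{ordered_real_vector, lattice}) \<Longrightarrow> labs x = x"
  unfolding labs_def by (rule sup_absorb1) (meson neg_le_0_iff_le order_trans)

lemma labs_labs[simp]: "labs (labs (x::'a::{ordered_real_vector, lattice})) = labs x"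
  by (simp add: labs_nonneg labs_pos)

lemma labs_zero[simp]: "labs (0::'a::{ordered_real_vector, lattice}) = 0"
  by (simp add: labs_def)

lemma labs_eq_self_iff: "labs (x::'a::{ordered_real_vector, lattice}) = x \<longleftrightarrow> 0 \<le> x"
  by (metis labs_nonneg labs_pos)

lemma labs_le_zero: "labs (x::'a::{ordered_real_vector, lattice}) \<le> 0 \<Longrightarrow> x = 0"
  unfolding labs_le_iff by (metis antisym neg_le_0_iff_le)

lemma labs_triangle: "labs ((x::'a::{ordered_real_vector, lattice}) + y) \<le> labs x + labs y"
  unfolding labs_le_iff using labs_ge add_mono by (metis minus_add_distrib)

lemma labs_diff_commute: "labs ((x::'a::{ordered_real_vector, lattice}) - y) = labs (y - x)"
  by (metis labs_neg minus_diff_eq)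

lemma scaleR_sup: "0 \<le> c \<Longrightarrow> c *\<^sub>R sup (a::'a::{ordered_real_vector, lattice}) b = sup (c *\<^sub>R a) (c *\<^sub>R b)"
proof (cases "c = 0")
  case False
  assume c: "0 \<le> c"
  with False have c: "0 < c" by simp
  show ?thesis
  proof (rule antisym)
    have "a \<le> inverse c *\<^sub>R sup (c *\<^sub>R a) (c *\<^sub>R b)"
      using scaleR_left_mono[of "c *\<^sub>R a" "sup (c *\<^sub>R a) (c *\<^sub>R b)" "inverse c"] c by simp
    moreover have "b \<le> inverse c *\<^sub>R sup (c *\<^sub>R a) (c *\<^sub>R b)"
      using scaleR_left_mono[of "c *\<^sub>R b" "sup (c *\<^sub>R a) (c *\<^sub>R b)" "inverse c"] c by simp
    ultimately have "sup a b \<le> inverse c *\<^sub>R sup (c *\<^sub>R a) (c *\<^sub>R b)" by simp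
    from scaleR_left_mono[OF this, of c] c
    show "c *\<^sub>R sup a b \<le> sup (c *\<^sub>R a) (c *\<^sub>R b)" by simp
    show "sup (c *\<^sub>R a) (c *\<^sub>R b) \<le> c *\<^sub>R sup a b"
      using c by (simp add: scaleR_left_mono)
  qed
qed simp

lemma scaleR_inf: "0 \<le> c \<Longrightarrow> c *\<^sub>R inf (a::'a::{ordered_real_vector, lattice}) b = inf (c *\<^sub>R a) (c *\<^sub>R b)"
proof (cases "c = 0")
  case False
  assume c: "0 \<le> c"
  with False have c: "0 < c" by simp
  show ?thesis
  proof (rule antisym)
    have "inverse c *\<^sub>R inf (c *\<^sub>R a) (c *\<^sub>R b) \<le> a"
      using scaleR_left_mono[of "inf (c *\<^sub>R a) (c *\<^sub>R b)" "c *\<^sub>R a" "inverse c"] c by simp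
    moreover have "inverse c *\<^sub>R inf (c *\<^sub>R a) (c *\<^sub>R b) \<le> b"
      using scaleR_left_mono[of "inf (c *\<^sub>R a) (c *\<^sub>R b)" "c *\<^sub>R b" "inverse c"] c by simp
    ultimately have "inverse c *\<^sub>R inf (c *\<^sub>R a) (c *\<^sub>R b) \<le> inf a b" by simp
    from scaleR_left_mono[OF this, of c] c
    show "inf (c *\<^sub>R a) (c *\<^sub>R b) \<le> c *\<^sub>R inf a b" by simp
    show "c *\<^sub>R inf a b \<le> inf (c *\<^sub>R a) (c *\<^sub>R b)"
      using c by (simp add: scaleR_left_mono)
  qed
qed simp

lemma labs_scaleR: "labs (c *\<^sub>R (x::'a::{ordered_real_vector, lattice})) = \<bar>c\<bar> *\<^sub>R labs x"
proof (cases "0 \<le> c")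
  case True
  then show ?thesis by (simp add: labs_def scaleR_sup)
next
  case False
  then have "c *\<^sub>R x = \<bar>c\<bar> *\<^sub>R (- x)" by simp
  then show ?thesis by (simp add: labs_def scaleR_sup sup_commute)
qed

lemma labs_sup_diff:
  fixes a b c d :: "'a::{ordered_real_vector, lattice}"
  shows "sup a b - sup c d \<le> labs (a - c) + labs (b - d)"
proof -
  have "a \<le> sup c d + (labs (a - c) + labs (b - d))"
  proof -
    have "a \<le> c + labs (a - c)" using labs_ge(1)[of "a - c"] by (simp add: algebra_simps)
    also have "\<dots> \<le> sup c d + (labs (a - c) + labs (b - d))"
      using labs_nonneg[of "b - d"] by (intro add_mono) auto
    finally show ?thesis .
  qed
  moreover have "b \<le> sup c d + (labs (a - c) + labs (b - d))"
  proof -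
    have "b \<le> d + labs (b - d)" using labs_ge(1)[of "b - d"] by (simp add: algebra_simps)
    also have "\<dots> \<le> sup c d + (labs (a - c) + labs (b - d))"
      using labs_nonneg[of "a - c"] by (intro add_mono) auto
    finally show ?thesis .
  qed
  ultimately have "sup a b \<le> sup c d + (labs (a - c) + labs (b - d))" by simp
  then show ?thesis by (simp add: algebra_simps)
qed

lemma labs_sup_Birkhoff:
  fixes a b c d :: "'a::{ordered_real_vector, lattice}"
  shows "labs (sup a b - sup c d) \<le> labs (a - c) + labs (b - d)"
  unfolding labs_le_iff
  using labs_sup_diff[of a b c d] labs_sup_diff[of c d a b]
  by (simp add: labs_diff_commute)

lemma labs_labs_diff:
  fixes x y :: "'a::{ordered_real_vector, lattice}"
  shows "labs (labs x - labs y) \<le> labs (x - y)"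
proof -
  have "labs x \<le> labs (x - y) + labs y" using labs_triangle[of "x - y" y] by simp
  moreover have "labs y \<le> labs (x - y) + labs x" using labs_triangle[of "y - x" x]
    by (simp add: labs_diff_commute)
  ultimately have "labs x - labs y \<le> labs (x - y)" "- (labs x - labs y) \<le> labs (x - y)"
    by (simp_all add: algebra_simps)
  then show ?thesis unfolding labs_le_iff by simp
qed


lemma add_sup_left: "(s::'a::{ordered_real_vector, lattice}) + sup a b = sup (s + a) (s + b)"
proof (rule antisym)
  have "- s + (s + a) \<le> - s + sup (s + a) (s + b)" "- s + (s + b) \<le> - s + sup (s + a) (s + b)"
    by (rule add_left_mono, simp)+
  then have "sup a b \<le> - s + sup (s + a) (s + b)" by (simp add: add.assoc[symmetric])
  then have "s + sup a b \<le> s + (- s + sup (s + a) (s + b))" by (rule add_left_mono)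
  then show "s + sup a b \<le> sup (s + a) (s + b)" by (simp add: add.assoc[symmetric])
qed (simp add: add_left_mono)

lemma add_inf_left: "(s::'a::{ordered_real_vector, lattice}) + inf a b = inf (s + a) (s + b)"
proof (rule antisym)
  have "- s + inf (s + a) (s + b) \<le> - s + (s + a)" "- s + inf (s + a) (s + b) \<le> - s + (s + b)"
    by (rule add_left_mono, simp)+
  then have "- s + inf (s + a) (s + b) \<le> inf a b" by (simp add: add.assoc[symmetric])
  then have "s + (- s + inf (s + a) (s + b)) \<le> s + inf a b" by (rule add_left_mono)
  then show "inf (s + a) (s + b) \<le> s + inf a b" by (simp add: add.assoc[symmetric])
qed (simp add: add_left_mono)

lemma labs_continuous:
  assumes BL: "banach_lattice TYPE('a::{banach, ordered_real_vector, lattice})"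
  shows "continuous_on UNIV (labs :: 'a \<Rightarrow> 'a)"
proof (rule lipschitz_on_continuous_on[of 1], rule lipschitz_onI)
  fix x y :: 'a
  have "labs (labs x - labs y) \<le> labs (x - y)" by (rule labs_labs_diff)
  then have "norm (labs x - labs y) \<le> norm (x - y)"
    using BL unfolding banach_lattice_def by blast
  then show "dist (labs x) (labs y) \<le> 1 * dist x y" by (simp add: dist_norm)
qed simp

lemma get_unit:
  assumes AM: "AM_space TYPE('a::{banach, ordered_real_vector, lattice})"
    and S: "finite S" "S \<subseteq> cball (0::'a) 1" "cball (0::'a) 1 = closure (solid_convex_hull S)"
  shows "\<exists>e::'a. 0 \<le> e \<and> (\<forall>x. norm x \<le> 1 \<longleftrightarrow> labs x \<le> e)"
proof -
  have BL: "banach_lattice TYPE('a)" using AM by (simp add: AM_space_def)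
  have AMs: "\<And>x y::'a. 0 \<le> x \<Longrightarrow> 0 \<le> y \<Longrightarrow> norm (sup x y) = max (norm x) (norm y)"
    using AM by (simp add: AM_space_def)
  have nl: "norm (labs x) = norm x" for x :: 'a
    using BL unfolding banach_lattice_def by (simp add: antisym)
  have "finite S \<Longrightarrow> S \<subseteq> cball 0 1 \<Longrightarrow> \<exists>e::'a. 0 \<le> e \<and> norm e \<le> 1 \<and> (\<forall>s\<in>S. labs s \<le> e)"
  proof (induction S rule: finite_induct)
    case empty
    then show ?case by (intro exI[of _ 0]) auto
  next
    case (insert s F)
    then obtain e where e: "0 \<le> e" "norm e \<le> 1" "\<forall>t\<in>F. labs t \<le> e" by auto
    have ns: "norm s \<le> 1" using insert.prems by auto
    have "norm (sup (labs s) e) = max (norm (labs s)) (norm e)"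
      using AMs[OF labs_nonneg e(1)] .
    then have "norm (sup (labs s) e) \<le> 1" using ns e(2) nl by simp
    moreover have "0 \<le> sup (labs s) e" using e(1) le_supI2 by blast
    moreover have "\<forall>t\<in>insert s F. labs t \<le> sup (labs s) e"
      using e(3) le_supI2 by auto
    ultimately show ?case by blast
  qed
  with S obtain e :: 'a where e: "0 \<le> e" "norm e \<le> 1" "\<forall>s\<in>S. labs s \<le> e" by blast
  define D where "D = {x::'a. labs (e - labs x) = e - labs x}"
  have D_iff: "x \<in> D \<longleftrightarrow> labs x \<le> e" for x
    unfolding D_def using labs_eq_self_iff[of "e - labs x"] by simp
  have cl: "continuous_on UNIV (labs :: 'a \<Rightarrow> 'a)" by (rule labs_continuous[OF BL])
  have cl2: "continuous_on UNIV (\<lambda>x::'a. e - labs x)"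
    by (intro continuous_intros cl)
  have cl3: "continuous_on UNIV (\<lambda>x::'a. labs (e - labs x))"
    using continuous_on_compose2[OF cl cl2] by simp
  have "closed D" unfolding D_def by (rule closed_Collect_eq[OF cl3 cl2])
  have "convex D"
  proof (rule convexI)
    fix x y u v assume xy: "x \<in> D" "y \<in> D" and uv: "0 \<le> (u::real)" "0 \<le> v" "u + v = 1"
    have "labs (u *\<^sub>R x + v *\<^sub>R y) \<le> labs (u *\<^sub>R x) + labs (v *\<^sub>R y)" by (rule labs_triangle)
    also have "\<dots> = u *\<^sub>R labs x + v *\<^sub>R labs y" using uv by (simp add: labs_scaleR)
    also have "\<dots> \<le> u *\<^sub>R e + v *\<^sub>R e"
      using xy uv D_iff by (intro add_mono scaleR_left_mono) auto
    also have "\<dots> = e" using uv by (simp add: scaleR_add_left[symmetric])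
    finally show "u *\<^sub>R x + v *\<^sub>R y \<in> D" using D_iff by simp
  qed
  have "solid D" unfolding solid_def using D_iff order_trans by blast
  have "S \<subseteq> D" using e(3) D_iff by auto
  have "solid_convex_hull S \<subseteq> D"
    unfolding solid_convex_hull_def using \<open>S \<subseteq> D\<close> \<open>convex D\<close> \<open>solid D\<close> by blast
  then have "closure (solid_convex_hull S) \<subseteq> D"
    using \<open>closed D\<close> by (rule closure_minimal)
  then have 1: "norm x \<le> 1 \<Longrightarrow> labs x \<le> e" for x
    proof -
    assume "norm x \<le> 1"
    then have "x \<in> closure (solid_convex_hull S)" using S(3)[symmetric] by simp
    then show ?thesis using \<open>closure (solid_convex_hull S) \<subseteq> D\<close> D_iff by blast
  qed
  have 2: "labs x \<le> e \<Longrightarrow> norm x \<le> 1" for x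
    proof -
    assume "labs x \<le> e"
    then have "labs x \<le> labs e" using labs_pos[OF e(1)] by simp
    then have "norm x \<le> norm e" using BL unfolding banach_lattice_def by blast
    then show ?thesis using e(2) by simp
  qed
  show ?thesis using 1 2 e(1) by blast
qed




lemma inf_as_sup: "inf (a::'a::{ordered_real_vector, lattice}) b = - sup (- a) (- b)"
proof (rule antisym)
  have "- a \<le> - inf a b" "- b \<le> - inf a b" by simp_all
  then have "sup (- a) (- b) \<le> - inf a b" by simp
  then show "inf a b \<le> - sup (- a) (- b)" by (simp add: le_minus_iff)
next
  have "- sup (- a) (- b) \<le> a" "- sup (- a) (- b) \<le> b"
    by (simp_all add: minus_le_iff)
  then show "- sup (- a) (- b) \<le> inf a b" by simp
qed

definition pos :: "'a::{ordered_real_vector, lattice} \<Rightarrow> 'a" where "pos w = sup w 0"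

lemma pos_nonneg: "0 \<le> pos w" and le_pos: "w \<le> pos w"
  by (simp_all add: pos_def)

lemma pos_mono: "v \<le> w \<Longrightarrow> pos v \<le> pos w"
  unfolding pos_def by (meson order_trans sup.cobounded1 sup.cobounded2 sup_least)

lemma pos_zero: "w \<le> 0 \<Longrightarrow> pos w = 0"
  unfolding pos_def by (simp add: sup_absorb2)

lemma labs_le_pos: "labs w \<le> pos w + pos (- w)"
  unfolding labs_le_iff
proof
  show "w \<le> pos w + pos (- w)" using add_mono[OF le_pos[of w] pos_nonneg[of "- w"]] by simp
  show "- w \<le> pos w + pos (- w)" using add_mono[OF pos_nonneg[of w] le_pos[of "- w"]] by simp
qed

lemma inf_pos_neg: "inf (pos w) (pos (- w)) = 0"
proof -
  have 1: "pos (- w) = pos w + - w"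
    unfolding pos_def using add_sup_left[of "- w" w 0] by (simp add: add.commute sup_commute)
  have 2: "inf 0 (- w) = - pos w"
    unfolding pos_def by (simp add: inf_as_sup sup_commute)
  have "pos w + inf 0 (- w) = inf (pos w + 0) (pos w + - w)" by (rule add_inf_left)
  then show ?thesis using 1 2 by simp
qed

locale kak =
  fixes e :: "'a::{banach, ordered_real_vector, lattice}"
  assumes e_nonneg: "0 \<le> e" and unit: "\<And>x. norm x \<le> 1 \<longleftrightarrow> labs x \<le> e"
begin

lemma U2: assumes "0 \<le> c" shows "norm x \<le> c \<longleftrightarrow> labs x \<le> c *\<^sub>R e"
proof (cases "c = 0")
  case True
  then show ?thesis using labs_le_zero[of x] by auto
next
  case False
  with assms have c: "0 < c" by simp
  have "norm x \<le> c \<longleftrightarrow> norm (inverse c *\<^sub>R x) \<le> 1"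
    using c by (simp add: field_simps)
  also have "\<dots> \<longleftrightarrow> labs (inverse c *\<^sub>R x) \<le> e" by (rule unit)
  also have "\<dots> \<longleftrightarrow> labs x /\<^sub>R c \<le> e" using c by (simp add: labs_scaleR)
  also have "\<dots> \<longleftrightarrow> labs x \<le> c *\<^sub>R e" using c by (rule pos_divideR_le_eq)
  finally show ?thesis .
qed

lemma labs_le_norm: "labs x \<le> norm x *\<^sub>R e"
  using U2[of "norm x" x] by simp

lemma norm_mono: "labs (x::'a) \<le> labs y \<Longrightarrow> norm x \<le> norm y"
  using U2[of "norm y" x] labs_le_norm[of y] by (meson norm_ge_zero order_trans)

lemma norm_labs[simp]: "norm (labs (x::'a)) = norm x"
  by (metis antisym labs_labs norm_mono order_refl)

lemma norm_e: assumes "e \<noteq> 0" shows "norm e = 1"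
proof -
  have le: "norm e \<le> 1" using unit[of e] labs_pos[OF e_nonneg] by simp
  have "\<not> norm e < 1"
  proof
    assume lt: "norm e < 1"
    have "e \<le> norm e *\<^sub>R e" using labs_le_norm[of e] labs_pos[OF e_nonneg] by simp
    then have "(1 - norm e) *\<^sub>R e \<le> 0" by (simp add: algebra_simps)
    then have "inverse (1 - norm e) *\<^sub>R ((1 - norm e) *\<^sub>R e) \<le> 0"
      using lt scaleR_left_mono[of "(1 - norm e) *\<^sub>R e" 0 "inverse (1 - norm e)"] by simp
    then have "e \<le> 0" using lt by simp
    then show False using assms e_nonneg by simp
  qed
  then show ?thesis using le by simp
qed

definition K0 :: "('a \<Rightarrow> real) set" where
  "K0 = {\<phi>. (\<forall>x y. \<phi> (x + y) = \<phi> x + \<phi> y) \<and> (\<forall>c x. \<phi> (c *\<^sub>R x) = c * \<phi> x) \<and>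
            (\<forall>x y. \<phi> (sup x y) = max (\<phi> x) (\<phi> y)) \<and> \<phi> e = 1}"

context
  fixes \<phi> assumes phi: "\<phi> \<in> K0"
begin

lemma hom_add: "\<phi> (x + y) = \<phi> x + \<phi> y" using phi by (simp add: K0_def)
lemma hom_scale: "\<phi> (c *\<^sub>R x) = c * \<phi> x" using phi by (simp add: K0_def)
lemma hom_sup: "\<phi> (sup x y) = max (\<phi> x) (\<phi> y)" using phi by (simp add: K0_def)
lemma hom_e: "\<phi> e = 1" using phi by (simp add: K0_def)
lemma hom_zero: "\<phi> 0 = 0" using hom_scale[of 0 0] by simp
lemma hom_neg: "\<phi> (- x) = - \<phi> x" using hom_scale[of "-1" x] by simp
lemma hom_diff: "\<phi> (x - y) = \<phi> x - \<phi> y" using hom_add[of x "- y"] hom_neg[of y] by simp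
lemma hom_mono: "x \<le> y \<Longrightarrow> \<phi> x \<le> \<phi> y" using hom_sup[of x y] by (simp add: sup_absorb2)
lemma hom_labs: "\<phi> (labs x) = \<bar>\<phi> x\<bar>" unfolding labs_def hom_sup hom_neg by simp
lemma hom_inf: "\<phi> (inf x y) = min (\<phi> x) (\<phi> y)"
  unfolding inf_as_sup hom_neg hom_sup by simp
lemma hom_bound: "\<bar>\<phi> x\<bar> \<le> norm x"
proof -
  have "\<phi> (labs x) \<le> \<phi> (norm x *\<^sub>R e)" by (rule hom_mono[OF labs_le_norm])
  then show ?thesis by (simp add: hom_labs hom_scale hom_e)
qed

end

definition pideal :: "'a set \<Rightarrow> bool" where
  "pideal I \<longleftrightarrow> 0 \<in> I \<and> (\<forall>x\<in>I. \<forall>y\<in>I. x + y \<in> I) \<and> (\<forall>c x. x \<in> I \<longrightarrow> c *\<^sub>R x \<in> I) \<and>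
     (\<forall>x z. z \<in> I \<longrightarrow> labs x \<le> labs z \<longrightarrow> x \<in> I) \<and> e \<notin> I"

definition maxideal :: "'a set \<Rightarrow> bool" where
  "maxideal M \<longleftrightarrow> pideal M \<and> (\<forall>J. pideal J \<longrightarrow> M \<subseteq> J \<longrightarrow> J = M)"

context
  fixes I assumes I: "pideal I"
begin
lemma pi_zero: "0 \<in> I" using I by (simp add: pideal_def)
lemma pi_add: "x \<in> I \<Longrightarrow> y \<in> I \<Longrightarrow> x + y \<in> I" using I by (simp add: pideal_def)
lemma pi_scale: "x \<in> I \<Longrightarrow> c *\<^sub>R x \<in> I" using I by (simp add: pideal_def)
lemma pi_solid: "z \<in> I \<Longrightarrow> labs x \<le> labs z \<Longrightarrow> x \<in> I" using I unfolding pideal_def by blast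
lemma pi_e: "e \<notin> I" using I by (simp add: pideal_def)
lemma pi_labs: "x \<in> I \<Longrightarrow> labs x \<in> I" using pi_solid[of x "labs x"] by simp
lemma pi_neg: "x \<in> I \<Longrightarrow> - x \<in> I" using pi_scale[of x "-1"] by simp
lemma pi_diff: "x \<in> I \<Longrightarrow> y \<in> I \<Longrightarrow> x - y \<in> I" using pi_add[of x "- y"] pi_neg[of y] by simp
lemma pi_le: "0 \<le> x \<Longrightarrow> x \<le> y \<Longrightarrow> y \<in> I \<Longrightarrow> x \<in> I"
  using pi_solid[of y x] labs_pos[of x] labs_ge(1)[of y] by (metis order_trans)
lemma pi_e_scale: "c *\<^sub>R e \<in> I \<Longrightarrow> c = 0"
proof (rule ccontr)
  assume "c *\<^sub>R e \<in> I" "c \<noteq> 0"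
  then have "inverse c *\<^sub>R (c *\<^sub>R e) \<in> I" using pi_scale by blast
  then show False using \<open>c \<noteq> 0\<close> pi_e by (simp add: scaleR_scaleR)
qed
end

end




context kak
begin

lemma GEN:
  assumes M: "maxideal M" and p: "0 \<le> p" "p \<notin> M"
  shows "\<exists>m\<in>M. \<exists>c>0. e \<le> labs m + c *\<^sub>R p"
proof -
  have PM: "pideal M" using M by (simp add: maxideal_def)
  define J where "J = {z. \<exists>m\<in>M. \<exists>c\<ge>0. labs z \<le> labs m + c *\<^sub>R p}"
  have MJ: "M \<subseteq> J" unfolding J_def by force
  have pJ: "p \<in> J" unfolding J_def using pi_zero[OF PM] labs_pos[OF p(1)]
    by (intro CollectI bexI[of _ 0] exI[of _ 1]) auto
  have "e \<in> J"
  proof (rule ccontr)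
    assume eJ: "e \<notin> J"
    have "pideal J" unfolding pideal_def
    proof (intro conjI allI ballI impI)
      show "0 \<in> J" unfolding J_def using pi_zero[OF PM]
        by (intro CollectI bexI[of _ 0] exI[of _ 0]) auto
    next
      fix x y assume "x \<in> J" "y \<in> J"
      then obtain m1 c1 m2 c2 where m: "m1 \<in> M" "c1 \<ge> 0" "labs x \<le> labs m1 + c1 *\<^sub>R p"
        "m2 \<in> M" "c2 \<ge> 0" "labs y \<le> labs m2 + c2 *\<^sub>R p" unfolding J_def by blast
      have mm: "labs m1 + labs m2 \<in> M" using m pi_add[OF PM] pi_labs[OF PM] by blast
      have "labs (x + y) \<le> labs x + labs y" by (rule labs_triangle)
      also have "\<dots> \<le> (labs m1 + c1 *\<^sub>R p) + (labs m2 + c2 *\<^sub>R p)" using m by (intro add_mono)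
      also have "\<dots> = labs (labs m1 + labs m2) + (c1 + c2) *\<^sub>R p"
        using labs_pos[OF add_nonneg_nonneg[OF labs_nonneg[of m1] labs_nonneg[of m2]]]
        by (simp add: algebra_simps)
      finally have "labs (x + y) \<le> labs (labs m1 + labs m2) + (c1 + c2) *\<^sub>R p" .
      moreover have "0 \<le> c1 + c2" using m(2) m(5) by simp
      ultimately show "x + y \<in> J" unfolding J_def using mm by blast
    next
      fix c x assume "x \<in> J"
      then obtain m c1 where m: "m \<in> M" "c1 \<ge> 0" "labs x \<le> labs m + c1 *\<^sub>R p"
        unfolding J_def by blast
      have "labs (c *\<^sub>R x) = \<bar>c\<bar> *\<^sub>R labs x" by (rule labs_scaleR)
      also have "\<dots> \<le> \<bar>c\<bar> *\<^sub>R (labs m + c1 *\<^sub>R p)" using m(3) abs_ge_zero by (rule scaleR_left_mono)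
      also have "\<dots> = labs (c *\<^sub>R m) + (\<bar>c\<bar> * c1) *\<^sub>R p" by (simp add: labs_scaleR scaleR_add_right)
      finally have "labs (c *\<^sub>R x) \<le> labs (c *\<^sub>R m) + (\<bar>c\<bar> * c1) *\<^sub>R p" .
      moreover have "0 \<le> \<bar>c\<bar> * c1" using m(2) by simp
      moreover have "c *\<^sub>R m \<in> M" using pi_scale[OF PM m(1)] .
      ultimately show "c *\<^sub>R x \<in> J" unfolding J_def by blast
    next
      fix x z assume "z \<in> J" "labs x \<le> labs z"
      then obtain m c1 where "m \<in> M" "c1 \<ge> 0" "labs z \<le> labs m + c1 *\<^sub>R p" unfolding J_def by blast
      moreover have "labs x \<le> labs m + c1 *\<^sub>R p" using \<open>labs x \<le> labs z\<close> calculation(3) by (rule order_trans)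
      ultimately show "x \<in> J" unfolding J_def by blast
    next
      show "e \<notin> J" by (rule eJ)
    qed
    then have "J = M" using M MJ by (simp add: maxideal_def)
    then show False using pJ p by simp
  qed
  then obtain m c where m: "m \<in> M" "c \<ge> 0" "labs e \<le> labs m + c *\<^sub>R p" unfolding J_def by blast
  have "c *\<^sub>R p \<le> (c + 1) *\<^sub>R p" using p(1) by (intro scaleR_right_mono) auto
  then have "e \<le> labs m + (c + 1) *\<^sub>R p" using m(3) labs_pos[OF e_nonneg]
    by (metis add_left_mono order_trans)
  then show ?thesis using m(1) m(2) by (intro bexI[of _ m] exI[of _ "c + 1"]) auto
qed

lemma PRIME:
  assumes M: "maxideal M" and pq: "0 \<le> p" "0 \<le> q" "inf p q = 0"
  shows "p \<in> M \<or> q \<in> M"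
proof (rule ccontr)
  assume "\<not> (p \<in> M \<or> q \<in> M)"
  then have n: "p \<notin> M" "q \<notin> M" by auto
  have PM: "pideal M" using M by (simp add: maxideal_def)
  obtain m c where m: "m \<in> M" "c > 0" "e \<le> labs m + c *\<^sub>R p" using GEN[OF M pq(1) n(1)] by blast
  obtain m' c' where m': "m' \<in> M" "c' > 0" "e \<le> labs m' + c' *\<^sub>R q" using GEN[OF M pq(2) n(2)] by blast
  define s where "s = labs m + labs m'"
  define C where "C = max c c'"
  have s0: "0 \<le> s" unfolding s_def by (simp add: add_nonneg_nonneg labs_nonneg)
  have sM: "s \<in> M" unfolding s_def using m m' pi_add[OF PM] pi_labs[OF PM] by blast
  have "labs m + c *\<^sub>R p \<le> s + C *\<^sub>R p" unfolding s_def C_def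
    using pq labs_nonneg[of m'] by (intro add_mono scaleR_right_mono) auto
  with m have 1: "e \<le> s + C *\<^sub>R p" by order
  have "labs m' + c' *\<^sub>R q \<le> s + C *\<^sub>R q" unfolding s_def C_def
    using pq labs_nonneg[of m] by (intro add_mono scaleR_right_mono) auto
  with m' have 2: "e \<le> s + C *\<^sub>R q" by order
  have "e \<le> inf (s + C *\<^sub>R p) (s + C *\<^sub>R q)" using 1 2 by simp
  also have "\<dots> = s + C *\<^sub>R inf p q" using m(2) unfolding C_def
    by (simp add: add_inf_left[symmetric] scaleR_inf)
  also have "\<dots> = s" using pq by simp
  finally have "e \<le> s" .
  then have "e \<in> M" using pi_le[OF PM e_nonneg _ sM] by simp
  then show False using pi_e[OF PM] by simp
qed

lemma ARCH:
  assumes M: "maxideal M" and p: "0 \<le> p" and approx: "\<And>\<epsilon>. \<epsilon> > 0 \<Longrightarrow> \<exists>m\<in>M. p \<le> m + \<epsilon> *\<^sub>R e"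
  shows "p \<in> M"
proof (rule ccontr)
  assume n: "p \<notin> M"
  have PM: "pideal M" using M by (simp add: maxideal_def)
  obtain m' c where m': "m' \<in> M" "c > 0" "e \<le> labs m' + c *\<^sub>R p" using GEN[OF M p n] by blast
  obtain m where m: "m \<in> M" "p \<le> m + (inverse (2 * c)) *\<^sub>R e" using approx[of "inverse (2 * c)"] m'(2) by auto
  have "p \<le> labs m + (inverse (2 * c)) *\<^sub>R e" using m(2) labs_ge(1)[of m] by (meson add_right_mono order_trans)
  then have "c *\<^sub>R p \<le> c *\<^sub>R (labs m + (inverse (2 * c)) *\<^sub>R e)" using m'(2) by (intro scaleR_left_mono) auto
  also have "\<dots> = c *\<^sub>R labs m + (1/2::real) *\<^sub>R e" using m'(2) by (simp add: algebra_simps)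
  finally have "e \<le> labs m' + (c *\<^sub>R labs m + (1/2::real) *\<^sub>R e)" using m'(3) by (meson add_left_mono order_trans)
  then have "e - (1/2::real) *\<^sub>R e \<le> labs m' + c *\<^sub>R labs m" by (simp add: algebra_simps)
  moreover have "e - (1/2::real) *\<^sub>R e = (1/2::real) *\<^sub>R e" by (simp add: algebra_simps scaleR_2[symmetric] flip: scaleR_diff_left)
  ultimately have le: "(1/2::real) *\<^sub>R e \<le> labs m' + c *\<^sub>R labs m" by simp
  have sM: "labs m' + c *\<^sub>R labs m \<in> M" using m m' pi_add[OF PM] pi_labs[OF PM] pi_scale[OF PM] by blast
  have "0 \<le> (1/2::real) *\<^sub>R e" using e_nonneg scaleR_left_mono[of 0 e "1/2"] by simp
  then have "(1/2::real) *\<^sub>R e \<in> M" using pi_le[OF PM _ le sM] by simp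
  then show False using pi_e_scale[OF PM] by fastforce
qed

end




context kak
begin

lemma ONEDIM:
  assumes M: "maxideal M"
  shows "\<exists>l. z - l *\<^sub>R e \<in> M"
proof -
  have PM: "pideal M" using M by (simp add: maxideal_def)
  define n where "n = norm z"
  define A where "A = {\<mu>. pos (\<mu> *\<^sub>R e - z) \<in> M}"
  have dich: "pos (\<mu> *\<^sub>R e - z) \<in> M \<or> pos (z - \<mu> *\<^sub>R e) \<in> M" for \<mu>
    using PRIME[OF M pos_nonneg pos_nonneg inf_pos_neg[of "\<mu> *\<^sub>R e - z"]] by simp
  have zle: "z \<le> n *\<^sub>R e" "- z \<le> n *\<^sub>R e"
    using labs_le_norm[of z] labs_ge[of z] unfolding n_def by (meson order_trans)+
  have Ane: "- n \<in> A"
  proof -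
    have "(- n) *\<^sub>R e - z \<le> 0" using zle(2) by (simp add: algebra_simps minus_le_iff)
    then have "pos ((- n) *\<^sub>R e - z) = 0" by (rule pos_zero)
    then show ?thesis unfolding A_def using pi_zero[OF PM] by simp
  qed
  have Abdd: "\<mu> \<le> n" if "\<mu> \<in> A" for \<mu>
  proof (rule ccontr)
    assume "\<not> \<mu> \<le> n"
    then have gt: "\<mu> - n > 0" by simp
    have "(\<mu> - n) *\<^sub>R e \<le> \<mu> *\<^sub>R e - z" using zle(1) by (simp add: algebra_simps)
    also have "\<dots> \<le> pos (\<mu> *\<^sub>R e - z)" by (rule le_pos)
    finally have "(\<mu> - n) *\<^sub>R e \<in> M"
      using pi_le[OF PM _ _] that gt e_nonneg unfolding A_def
      by (metis less_eq_real_def mem_Collect_eq scaleR_nonneg_nonneg)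
    then show False using pi_e_scale[OF PM] gt by fastforce
  qed
  have bdd: "bdd_above A" using Abdd by (rule bdd_aboveI)
  have Ane': "A \<noteq> {}" using Ane by blast
  define l where "l = Sup A"
  have inA: "pos (l *\<^sub>R e - z) \<in> M"
  proof (rule ARCH[OF M pos_nonneg])
    fix \<epsilon> :: real assume "\<epsilon> > 0"
    then have "l - \<epsilon> < Sup A" unfolding l_def by simp
    then obtain \<mu> where mu: "\<mu> \<in> A" "l - \<epsilon> < \<mu>" using less_cSupE[OF _ Ane'] by blast
    define m where "m = pos (\<mu> *\<^sub>R e - z)"
    have mM: "m \<in> M" using mu(1) unfolding A_def m_def by simp
    have m0: "0 \<le> m" unfolding m_def by (rule pos_nonneg)
    have "(l - \<mu>) *\<^sub>R e \<le> \<epsilon> *\<^sub>R e" using mu(2) e_nonneg by (intro scaleR_right_mono) auto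
    moreover have "\<mu> *\<^sub>R e - z \<le> m" unfolding m_def by (rule le_pos)
    ultimately have "(\<mu> *\<^sub>R e - z) + (l - \<mu>) *\<^sub>R e \<le> m + \<epsilon> *\<^sub>R e" by (rule add_mono[rotated])
    then have 1: "l *\<^sub>R e - z \<le> m + \<epsilon> *\<^sub>R e" by (simp add: algebra_simps)
    have 2: "0 \<le> m + \<epsilon> *\<^sub>R e" using \<open>\<epsilon> > 0\<close> by (intro add_nonneg_nonneg[OF m0] scaleR_nonneg_nonneg e_nonneg) simp
    have "pos (l *\<^sub>R e - z) \<le> m + \<epsilon> *\<^sub>R e" unfolding pos_def using 1 2 by simp
    then show "\<exists>m\<in>M. pos (l *\<^sub>R e - z) \<le> m + \<epsilon> *\<^sub>R e" using mM by blast
  qed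
  have inB: "pos (z - l *\<^sub>R e) \<in> M"
  proof (rule ARCH[OF M pos_nonneg])
    fix \<epsilon> :: real assume ep: "\<epsilon> > 0"
    define \<mu> where "\<mu> = l + \<epsilon> / 2"
    have "\<mu> \<notin> A"
    proof
      assume "\<mu> \<in> A"
      then have "\<mu> \<le> l" unfolding l_def using cSup_upper[OF _ bdd] by blast
      then show False using ep unfolding \<mu>_def by simp
    qed
    then have mM: "pos (z - \<mu> *\<^sub>R e) \<in> M" using dich[of \<mu>] unfolding A_def by simp
    define m where "m = pos (z - \<mu> *\<^sub>R e)"
    have m0: "0 \<le> m" unfolding m_def by (rule pos_nonneg)
    have "(\<epsilon> / 2) *\<^sub>R e \<le> \<epsilon> *\<^sub>R e" using ep e_nonneg by (intro scaleR_right_mono) auto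
    moreover have "z - \<mu> *\<^sub>R e \<le> m" unfolding m_def by (rule le_pos)
    ultimately have "(z - \<mu> *\<^sub>R e) + (\<epsilon> / 2) *\<^sub>R e \<le> m + \<epsilon> *\<^sub>R e" by (rule add_mono[rotated])
    then have 1: "z - l *\<^sub>R e \<le> m + \<epsilon> *\<^sub>R e" unfolding \<mu>_def by (simp add: algebra_simps)
    have 2: "0 \<le> m + \<epsilon> *\<^sub>R e" using ep by (intro add_nonneg_nonneg[OF m0] scaleR_nonneg_nonneg e_nonneg) simp
    have "pos (z - l *\<^sub>R e) \<le> m + \<epsilon> *\<^sub>R e" unfolding pos_def using 1 2 by simp
    then show "\<exists>m\<in>M. pos (z - l *\<^sub>R e) \<le> m + \<epsilon> *\<^sub>R e" using mM m_def by blast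
  qed
  have sM: "pos (z - l *\<^sub>R e) + pos (l *\<^sub>R e - z) \<in> M" using inA inB pi_add[OF PM] by blast
  have "labs (z - l *\<^sub>R e) \<le> pos (z - l *\<^sub>R e) + pos (l *\<^sub>R e - z)"
    using labs_le_pos[of "z - l *\<^sub>R e"] by simp
  also have "\<dots> = labs (pos (z - l *\<^sub>R e) + pos (l *\<^sub>R e - z))"
    by (simp add: labs_pos add_nonneg_nonneg pos_nonneg)
  finally have "z - l *\<^sub>R e \<in> M" using pi_solid[OF PM sM] by simp
  then show ?thesis by blast
qed

end




context kak
begin

lemma uniq_coef:
  assumes "pideal M" "z - l *\<^sub>R e \<in> M" "z - l' *\<^sub>R e \<in> M"
  shows "l = l'"
proof -
  have "(z - l *\<^sub>R e) - (z - l' *\<^sub>R e) \<in> M" using pi_diff[OF assms(1) assms(2,3)] .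
  then have "(l' - l) *\<^sub>R e \<in> M" by (simp add: algebra_simps)
  then show ?thesis using pi_e_scale[OF assms(1)] by fastforce
qed

definition phiM :: "'a set \<Rightarrow> 'a \<Rightarrow> real" where
  "phiM M z = (THE l. z - l *\<^sub>R e \<in> M)"

lemma phiM_prop:
  assumes M: "maxideal M"
  shows "z - phiM M z *\<^sub>R e \<in> M"
proof -
  have PM: "pideal M" using M by (simp add: maxideal_def)
  obtain l where l: "z - l *\<^sub>R e \<in> M" using ONEDIM[OF M] by blast
  have "phiM M z = l" unfolding phiM_def
  proof (rule the_equality)
    show "z - l *\<^sub>R e \<in> M" by (rule l)
    fix l' assume "z - l' *\<^sub>R e \<in> M"
    then show "l' = l" using uniq_coef[OF PM l] by simp
  qed
  then show ?thesis using l by simp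
qed

lemma phiM_eq:
  assumes M: "maxideal M" and "z - l *\<^sub>R e \<in> M"
  shows "phiM M z = l"
  using uniq_coef[OF _ phiM_prop[OF M] assms(2)] M by (simp add: maxideal_def)

lemma phiM_K0:
  assumes M: "maxideal M"
  shows "phiM M \<in> K0"
proof -
  have PM: "pideal M" using M by (simp add: maxideal_def)
  let ?p = "phiM M"
  have P: "\<And>z. z - ?p z *\<^sub>R e \<in> M" using phiM_prop[OF M] .
  have add: "?p (x + y) = ?p x + ?p y" for x y
  proof (rule phiM_eq[OF M])
    have "(x - ?p x *\<^sub>R e) + (y - ?p y *\<^sub>R e) \<in> M" using pi_add[OF PM P P] .
    then show "x + y - (?p x + ?p y) *\<^sub>R e \<in> M" by (simp add: algebra_simps)
  qed
  have scale: "?p (c *\<^sub>R x) = c * ?p x" for c x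
  proof (rule phiM_eq[OF M])
    have "c *\<^sub>R (x - ?p x *\<^sub>R e) \<in> M" using pi_scale[OF PM P] .
    then show "c *\<^sub>R x - (c * ?p x) *\<^sub>R e \<in> M" by (simp add: algebra_simps)
  qed
  have supr: "?p (sup x y) = max (?p x) (?p y)" for x y
  proof (rule phiM_eq[OF M])
    have eq: "max (?p x) (?p y) *\<^sub>R e = sup (?p x *\<^sub>R e) (?p y *\<^sub>R e)"
    proof (cases "?p x \<le> ?p y")
      case True
      then have "?p x *\<^sub>R e \<le> ?p y *\<^sub>R e" using e_nonneg by (rule scaleR_right_mono)
      then show ?thesis using True by (simp add: sup_absorb2)
    next
      case False
      then have "?p y *\<^sub>R e \<le> ?p x *\<^sub>R e" using e_nonneg by (intro scaleR_right_mono) auto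
      then show ?thesis using False by (simp add: sup_absorb1)
    qed
    have sM: "labs (x - ?p x *\<^sub>R e) + labs (y - ?p y *\<^sub>R e) \<in> M"
      using pi_add[OF PM pi_labs[OF PM P] pi_labs[OF PM P]] .
    have "labs (sup x y - max (?p x) (?p y) *\<^sub>R e) \<le> labs (x - ?p x *\<^sub>R e) + labs (y - ?p y *\<^sub>R e)"
      unfolding eq by (rule labs_sup_Birkhoff)
    also have "\<dots> = labs (labs (x - ?p x *\<^sub>R e) + labs (y - ?p y *\<^sub>R e))"
      by (simp add: labs_pos add_nonneg_nonneg labs_nonneg)
    finally show "sup x y - max (?p x) (?p y) *\<^sub>R e \<in> M" using pi_solid[OF PM sM] by blast
  qed
  have pe: "?p e = 1" by (rule phiM_eq[OF M]) (simp add: pi_zero[OF PM])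
  show ?thesis unfolding K0_def using add scale supr pe by blast
qed

lemma exists_hom:
  assumes e0: "e \<noteq> 0" and a: "0 \<le> a" "norm a = 1"
  shows "\<exists>\<phi>\<in>K0. \<phi> a = 1"
proof -
  have "labs a \<le> 1 *\<^sub>R e" using U2[of 1 a] a by simp
  then have ae: "a \<le> e" using labs_pos[OF a(1)] by simp
  define u where "u = e - a"
  have u0: "0 \<le> u" unfolding u_def using ae by simp
  define Iu where "Iu = {z. \<exists>c\<ge>0. labs z \<le> c *\<^sub>R u}"
  have "pideal Iu" unfolding pideal_def
  proof (intro conjI allI ballI impI)
    show "0 \<in> Iu" unfolding Iu_def by (intro CollectI exI[of _ 0]) simp
  next
    fix x y assume "x \<in> Iu" "y \<in> Iu"
    then obtain c1 c2 where c: "c1 \<ge> 0" "labs x \<le> c1 *\<^sub>R u" "c2 \<ge> 0" "labs y \<le> c2 *\<^sub>R u"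
      unfolding Iu_def by blast
    have "labs (x + y) \<le> labs x + labs y" by (rule labs_triangle)
    also have "\<dots> \<le> c1 *\<^sub>R u + c2 *\<^sub>R u" using c(2,4) by (rule add_mono)
    also have "\<dots> = (c1 + c2) *\<^sub>R u" by (simp add: scaleR_add_left)
    finally have "labs (x + y) \<le> (c1 + c2) *\<^sub>R u" .
    moreover have "0 \<le> c1 + c2" using c by simp
    ultimately show "x + y \<in> Iu" unfolding Iu_def by blast
  next
    fix c x assume "x \<in> Iu"
    then obtain c1 where c1: "c1 \<ge> 0" "labs x \<le> c1 *\<^sub>R u" unfolding Iu_def by blast
    have "labs (c *\<^sub>R x) = \<bar>c\<bar> *\<^sub>R labs x" by (rule labs_scaleR)
    also have "\<dots> \<le> \<bar>c\<bar> *\<^sub>R (c1 *\<^sub>R u)" using c1(2) abs_ge_zero by (rule scaleR_left_mono)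
    also have "\<dots> = (\<bar>c\<bar> * c1) *\<^sub>R u" by simp
    finally have "labs (c *\<^sub>R x) \<le> (\<bar>c\<bar> * c1) *\<^sub>R u" .
    moreover have "0 \<le> \<bar>c\<bar> * c1" using c1 by simp
    ultimately show "c *\<^sub>R x \<in> Iu" unfolding Iu_def by blast
  next
    fix x z assume "z \<in> Iu" "labs x \<le> labs z"
    then obtain c1 where c1: "c1 \<ge> 0" "labs z \<le> c1 *\<^sub>R u" unfolding Iu_def by blast
    have "labs x \<le> c1 *\<^sub>R u" using \<open>labs x \<le> labs z\<close> c1(2) by (rule order_trans)
    then show "x \<in> Iu" unfolding Iu_def using c1(1) by blast
  next
    show "e \<notin> Iu"
    proof
      assume "e \<in> Iu"
      then obtain c where c: "c \<ge> 0" "labs e \<le> c *\<^sub>R u" unfolding Iu_def by blast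
      then have ec: "e \<le> c *\<^sub>R e - c *\<^sub>R a" using labs_pos[OF e_nonneg] unfolding u_def
        by (simp add: scaleR_diff_right)
      then have ca: "c *\<^sub>R a \<le> (c - 1) *\<^sub>R e" by (simp add: algebra_simps)
      show False
      proof (cases "c \<le> 1")
        case True
        have "(c - 1) *\<^sub>R e \<le> 0 *\<^sub>R e" using True e_nonneg by (intro scaleR_right_mono) auto
        with ca have ca0: "c *\<^sub>R a \<le> 0" by simp
        show False
        proof (cases "c = 0")
          case True
          then have "e \<le> 0" using ec by simp
          then show False using e_nonneg e0 by simp
        next
          case False
          with c(1) have "c > 0" by simp
          then have "inverse c *\<^sub>R (c *\<^sub>R a) \<le> inverse c *\<^sub>R 0"
            using ca0 by (intro scaleR_left_mono) auto
          then have "a \<le> 0" using \<open>c > 0\<close> by simp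
          then have "a = 0" using a(1) by simp
          then show False using a(2) by simp
        qed
      next
        case False
        then have cp: "c > 0" by simp
        have "inverse c *\<^sub>R (c *\<^sub>R a) \<le> inverse c *\<^sub>R ((c - 1) *\<^sub>R e)"
          using ca cp by (intro scaleR_left_mono) auto
        then have "labs a \<le> ((c - 1) / c) *\<^sub>R e" using cp labs_pos[OF a(1)]
          by (simp add: divide_inverse mult.commute)
        moreover have "0 \<le> (c - 1) / c" using False by simp
        ultimately have "norm a \<le> (c - 1) / c" using U2 by blast
        moreover have "(c - 1) / c < 1" using cp by simp
        ultimately show False using a(2) by simp
      qed
    qed
  qed
  have uIu: "u \<in> Iu" unfolding Iu_def using labs_pos[OF u0]
    by (intro CollectI exI[of _ 1]) simp
  define Fam where "Fam = {I. pideal I \<and> u \<in> I}"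
  have "\<exists>M\<in>Fam. \<forall>X\<in>Fam. M \<subseteq> X \<longrightarrow> X = M"
  proof (rule subset_Zorn_nonempty)
    show "Fam \<noteq> {}" unfolding Fam_def using \<open>pideal Iu\<close> uIu by blast
  next
    fix C assume C: "C \<noteq> {}" "subset.chain Fam C"
    have CF: "C \<subseteq> Fam" and ch: "\<And>X Y. X \<in> C \<Longrightarrow> Y \<in> C \<Longrightarrow> X \<subseteq> Y \<or> Y \<subseteq> X"
      using C(2) unfolding subset_chain_def by blast+
    have PI: "\<And>X. X \<in> C \<Longrightarrow> pideal X" and uX: "\<And>X. X \<in> C \<Longrightarrow> u \<in> X"
      using CF unfolding Fam_def by blast+
    obtain X0 where X0: "X0 \<in> C" using C(1) by blast
    have "pideal (\<Union>C)" unfolding pideal_def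
    proof (intro conjI allI ballI impI)
      show "0 \<in> \<Union>C" using pi_zero[OF PI[OF X0]] X0 by blast
    next
      fix x y assume "x \<in> \<Union>C" "y \<in> \<Union>C"
      then obtain X Y where XY: "X \<in> C" "Y \<in> C" "x \<in> X" "y \<in> Y" by blast
      show "x + y \<in> \<Union>C"
      proof (cases "X \<subseteq> Y")
        case True
        then show ?thesis using pi_add[OF PI[OF XY(2)], of x y] XY by blast
      next
        case False
        then have "Y \<subseteq> X" using ch[OF XY(1,2)] by blast
        then show ?thesis using pi_add[OF PI[OF XY(1)], of x y] XY by blast
      qed
    next
      fix c x assume "x \<in> \<Union>C"
      then obtain X where "X \<in> C" "x \<in> X" by blast
      then show "c *\<^sub>R x \<in> \<Union>C" using pi_scale[OF PI] by blast
    next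
      fix x z assume "z \<in> \<Union>C" "labs x \<le> labs z"
      then obtain X where "X \<in> C" "z \<in> X" by blast
      then show "x \<in> \<Union>C" using pi_solid[OF PI] \<open>labs x \<le> labs z\<close> by blast
    next
      show "e \<notin> \<Union>C" using pi_e[OF PI] by blast
    qed
    then show "\<Union>C \<in> Fam" unfolding Fam_def using uX X0 by blast
  qed
  then obtain M where MF: "M \<in> Fam" and Mmax: "\<forall>X\<in>Fam. M \<subseteq> X \<longrightarrow> X = M" by blast
  have PM: "pideal M" and uM: "u \<in> M" using MF unfolding Fam_def by blast+
  have M: "maxideal M" unfolding maxideal_def
  proof (intro conjI allI impI)
    show "pideal M" by (rule PM)
    fix J assume "pideal J" "M \<subseteq> J"
    then show "J = M" using Mmax uM unfolding Fam_def by blast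
  qed
  have "(a - phiM M a *\<^sub>R e) + u \<in> M" using pi_add[OF PM phiM_prop[OF M] uM] .
  then have "e - phiM M a *\<^sub>R e \<in> M" unfolding u_def by (simp add: algebra_simps)
  then have "phiM M e = phiM M a" by (rule phiM_eq[OF M])
  moreover have "phiM M e = 1" using phiM_K0[OF M] hom_e by blast
  ultimately show ?thesis using phiM_K0[OF M] by metis
qed

end




context kak
begin

lemma cont_ev: "continuous_on S (\<lambda>\<phi>::'a \<Rightarrow> real. \<phi> x)"
  by (rule continuous_on_subset[OF continuous_on_product_coordinates subset_UNIV])

lemma K0_closed: "closed K0"
proof -
  have eq: "K0 = (\<Inter>x. \<Inter>y. {\<phi>. \<phi> (x + y) = \<phi> x + \<phi> y}) \<inter> (\<Inter>c. \<Inter>x. {\<phi>. \<phi> (c *\<^sub>R x) = c * \<phi> x})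
       \<inter> (\<Inter>x. \<Inter>y. {\<phi>. \<phi> (sup x y) = max (\<phi> x) (\<phi> y)}) \<inter> {\<phi>. \<phi> e = 1}"
    by (rule set_eqI) (simp add: K0_def)
  show ?thesis unfolding eq
    by (intro closed_Int closed_INT ballI closed_Collect_eq continuous_intros cont_ev)
qed

lemma K0_compact: "compact K0"
proof -
  define B where "B = (\<Pi>\<^sub>E x\<in>(UNIV::'a set). cball (0::real) (norm x))"
  have "compactin (product_topology (\<lambda>_. euclideanreal) (UNIV::'a set)) B"
    unfolding B_def compactin_PiE by simp
  then have "compact B" by (simp add: euclidean_product_topology)
  moreover have "K0 \<subseteq> B"
  proof
    fix \<phi> assume "\<phi> \<in> K0"
    then have "\<forall>x. \<phi> x \<in> cball 0 (norm x)" using hom_bound by simp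
    then show "\<phi> \<in> B" unfolding B_def by (simp add: PiE_UNIV_domain)
  qed
  ultimately have "compact (B \<inter> K0)" using K0_closed by blast
  then show ?thesis using \<open>K0 \<subseteq> B\<close> by (simp add: Int_absorb1)
qed

lemma K0_compact_space: "compact_space (top_of_set K0)"
  using K0_compact compact_space_subtopology compactin_euclidean_iff by blast

lemma K0_Hausdorff: "Hausdorff_space (top_of_set K0)"
proof -
  have "Hausdorff_space (product_topology (\<lambda>_. euclideanreal) (UNIV::'a set))"
    by (simp add: Hausdorff_space_product_topology)
  then have "Hausdorff_space (euclidean :: ('a \<Rightarrow> real) topology)"
    by (simp add: euclidean_product_topology)
  then show ?thesis by (rule Hausdorff_space_subtopology)
qed

lemma norm_attained: "\<exists>\<phi>\<in>K0. \<bar>\<phi> y\<bar> = norm y" if e0: "e \<noteq> 0"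
proof (cases "y = 0")
  case True
  obtain \<phi> where "\<phi> \<in> K0" using exists_hom[OF e0 e_nonneg norm_e[OF e0]] by blast
  then show ?thesis using True hom_zero by auto
next
  case False
  define a where "a = labs y /\<^sub>R norm y"
  have a0: "0 \<le> a" unfolding a_def using False
    by (intro scaleR_nonneg_nonneg labs_nonneg) simp
  have na: "norm a = 1" unfolding a_def using False by simp
  obtain \<phi> where phi: "\<phi> \<in> K0" "\<phi> a = 1" using exists_hom[OF e0 a0 na] by blast
  have "\<phi> (labs y) = norm y * \<phi> a"
  proof -
    have "labs y = norm y *\<^sub>R a" unfolding a_def using False by simp
    then show ?thesis using hom_scale[OF phi(1)] by simp
  qed
  then show ?thesis using phi hom_labs by auto
qed

lemma norm_le_bound:
  assumes "\<And>\<phi>. \<phi> \<in> K0 \<Longrightarrow> \<bar>\<phi> y\<bar> \<le> B" "0 \<le> B"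
  shows "norm y \<le> B"
proof (cases "e = 0")
  case True
  have "labs y \<le> 0" using labs_le_norm[of y] True by simp
  then have "y = 0" by (rule labs_le_zero)
  then show ?thesis using assms(2) by simp
next
  case False
  then obtain \<phi> where "\<phi> \<in> K0" "\<bar>\<phi> y\<bar> = norm y" using norm_attained by blast
  then show ?thesis using assms(1) by metis
qed

lemma norm_sup: "sup_norm (top_of_set K0) (\<lambda>\<phi>. if \<phi> \<in> K0 then \<phi> y else 0) = norm y"
proof (cases "e = 0")
  case True
  have "K0 = {}"
  proof -
    { fix \<phi> assume "\<phi> \<in> K0"
      then have False using hom_zero[of \<phi>] hom_e[of \<phi>] True by simp }
    then show ?thesis by blast
  qed
  moreover have "y = 0" using labs_le_norm[of y] True labs_le_zero by simp
  ultimately show ?thesis by (simp add: sup_norm_def)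
next
  case False
  then obtain \<phi> where phi: "\<phi> \<in> K0" "\<bar>\<phi> y\<bar> = norm y" using norm_attained by blast
  have "(SUP t\<in>K0. \<bar>if t \<in> K0 then t y else 0\<bar>) = norm y"
  proof (rule cSup_eq_maximum)
    show "norm y \<in> (\<lambda>t. \<bar>if t \<in> K0 then t y else 0\<bar>) ` K0" using phi by force
    fix r assume "r \<in> (\<lambda>t. \<bar>if t \<in> K0 then t y else 0\<bar>) ` K0"
    then show "r \<le> norm y" using hom_bound by auto
  qed
  then show ?thesis using phi by (auto simp: sup_norm_def)
qed

end




context kak
begin

lemma finite_min:
  fixes g :: "'b \<Rightarrow> 'a"
  assumes "finite T" "T \<noteq> {}"
  shows "\<exists>h. \<forall>\<phi>\<in>K0. \<phi> h = Min ((\<lambda>t. \<phi> (g t)) ` T)"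
  using assms
proof (induction T rule: finite_ne_induct)
  case (singleton t)
  then show ?case by (intro exI[of _ "g t"]) simp
next
  case (insert t F)
  then obtain h where h: "\<forall>\<phi>\<in>K0. \<phi> h = Min ((\<lambda>t. \<phi> (g t)) ` F)" by blast
  have "\<forall>\<phi>\<in>K0. \<phi> (inf (g t) h) = Min ((\<lambda>t. \<phi> (g t)) ` insert t F)"
  proof
    fix \<phi> assume p: "\<phi> \<in> K0"
    have "\<phi> (inf (g t) h) = min (\<phi> (g t)) (\<phi> h)" by (rule hom_inf[OF p])
    also have "\<dots> = Min ((\<lambda>t. \<phi> (g t)) ` insert t F)" using h p insert by (simp add: Min_insert)
    finally show "\<phi> (inf (g t) h) = Min ((\<lambda>t. \<phi> (g t)) ` insert t F)" .
  qed
  then show ?case by blast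
qed

lemma finite_max:
  fixes g :: "'b \<Rightarrow> 'a"
  assumes "finite T" "T \<noteq> {}"
  shows "\<exists>h. \<forall>\<phi>\<in>K0. \<phi> h = Max ((\<lambda>t. \<phi> (g t)) ` T)"
  using assms
proof (induction T rule: finite_ne_induct)
  case (singleton t)
  then show ?case by (intro exI[of _ "g t"]) simp
next
  case (insert t F)
  then obtain h where h: "\<forall>\<phi>\<in>K0. \<phi> h = Max ((\<lambda>t. \<phi> (g t)) ` F)" by blast
  have "\<forall>\<phi>\<in>K0. \<phi> (sup (g t) h) = Max ((\<lambda>t. \<phi> (g t)) ` insert t F)"
  proof
    fix \<phi> assume p: "\<phi> \<in> K0"
    have "\<phi> (sup (g t) h) = max (\<phi> (g t)) (\<phi> h)" by (rule hom_sup[OF p])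
    also have "\<dots> = Max ((\<lambda>t. \<phi> (g t)) ` insert t F)" using h p insert by (simp add: Max_insert)
    finally show "\<phi> (sup (g t) h) = Max ((\<lambda>t. \<phi> (g t)) ` insert t F)" .
  qed
  then show ?case by blast
qed

lemma interp:
  assumes s: "s \<in> K0" and t: "t \<in> K0"
  shows "\<exists>g. s g = f s \<and> t g = f t"
proof (cases "s = t")
  case True
  show ?thesis using s True
    by (intro exI[of _ "f s *\<^sub>R e"]) (simp add: hom_scale hom_e)
next
  case False
  then obtain z where z: "s z \<noteq> t z" by (meson ext)
  define \<beta> where "\<beta> = (f s - f t) / (s z - t z)"
  define \<alpha> where "\<alpha> = f s - \<beta> * s z"
  have "s (\<alpha> *\<^sub>R e + \<beta> *\<^sub>R z) = \<alpha> + \<beta> * s z" using s by (simp add: hom_add hom_scale hom_e)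
  also have "\<dots> = f s" unfolding \<alpha>_def by simp
  finally have 1: "s (\<alpha> *\<^sub>R e + \<beta> *\<^sub>R z) = f s" .
  have "t (\<alpha> *\<^sub>R e + \<beta> *\<^sub>R z) = \<alpha> + \<beta> * t z" using t by (simp add: hom_add hom_scale hom_e)
  also have "\<dots> = f s - \<beta> * (s z - t z)" unfolding \<alpha>_def by (simp add: algebra_simps)
  also have "\<dots> = f t" unfolding \<beta>_def using z by simp
  finally have 2: "t (\<alpha> *\<^sub>R e + \<beta> *\<^sub>R z) = f t" .
  show ?thesis using 1 2 by blast
qed

lemma open_piece:
  assumes "continuous_on K0 f" and that: "open B"
  shows "\<exists>A. open A \<and> A \<inter> K0 = {\<phi>. \<phi> g - f \<phi> \<in> B} \<inter> K0"
proof -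
  have "continuous_on K0 (\<lambda>\<phi>. \<phi> g - f \<phi>)" by (intro continuous_intros cont_ev assms)
  then show ?thesis using that unfolding continuous_on_open_invariant by (simp add: vimage_def)
qed

lemma step1:
  assumes f: "continuous_on K0 f" and ep: "\<epsilon> > 0" and s: "s \<in> K0"
  shows "\<exists>h. s h = f s \<and> (\<forall>\<phi>\<in>K0. \<phi> h < f \<phi> + \<epsilon>)"
proof -
  have "\<forall>t\<in>K0. \<exists>g. s g = f s \<and> t g = f t" using interp[OF s] by blast
  then obtain G where G: "\<forall>t\<in>K0. s (G t) = f s \<and> t (G t) = f t" by (rule bchoice[elim_format]) blast
  have "\<forall>t. \<exists>A. open A \<and> A \<inter> K0 = {\<phi>. \<phi> (G t) - f \<phi> \<in> {..<\<epsilon>}} \<inter> K0"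
    using open_piece[OF f open_lessThan] by blast
  then obtain A where A: "\<And>t. open (A t)" "\<And>t. A t \<inter> K0 = {\<phi>. \<phi> (G t) - f \<phi> \<in> {..<\<epsilon>}} \<inter> K0"
    by metis
  have cov: "K0 \<subseteq> (\<Union>t\<in>K0. A t)"
  proof
    fix t assume t: "t \<in> K0"
    then have "t \<in> A t \<inter> K0" unfolding A(2) using G ep by auto
    then show "t \<in> (\<Union>t\<in>K0. A t)" using t by blast
  qed
  obtain T where T: "T \<subseteq> K0" "finite T" "K0 \<subseteq> (\<Union>t\<in>T. A t)"
    using compactE_image[OF K0_compact A(1) cov] by blast
  have Tne: "T \<noteq> {}" using T(3) s by blast
  obtain h where h: "\<forall>\<phi>\<in>K0. \<phi> h = Min ((\<lambda>t. \<phi> (G t)) ` T)" using finite_min[OF T(2) Tne] by blast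
  have "(\<lambda>t. s (G t)) ` T = (\<lambda>t. f s) ` T" using G T(1) by (intro image_cong) auto
  also have "\<dots> = {f s}" using Tne by (metis ex_in_conv image_constant)
  finally have imeq: "(\<lambda>t. s (G t)) ` T = {f s}" .
  have "s h = Min ((\<lambda>t. s (G t)) ` T)" using h s by blast
  then have "s h = f s" unfolding imeq by simp
  moreover have "\<phi> h < f \<phi> + \<epsilon>" if p: "\<phi> \<in> K0" for \<phi>
  proof -
    obtain t where t: "t \<in> T" "\<phi> \<in> A t" using T(3) p by blast
    then have "\<phi> \<in> A t \<inter> K0" using p by blast
    then have lt: "\<phi> (G t) - f \<phi> < \<epsilon>" unfolding A(2) by simp
    have "Min ((\<lambda>t. \<phi> (G t)) ` T) \<le> \<phi> (G t)" using T(2) t(1) by (intro Min_le) auto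
    moreover have "\<phi> h = Min ((\<lambda>t. \<phi> (G t)) ` T)" using h p by blast
    ultimately have "\<phi> h \<le> \<phi> (G t)" by simp
    then show ?thesis using lt by simp
  qed
  ultimately show ?thesis by blast
qed

lemma density:
  assumes f: "continuous_on K0 f" and ep: "\<epsilon> > 0"
  shows "\<exists>h. \<forall>\<phi>\<in>K0. \<bar>\<phi> h - f \<phi>\<bar> < \<epsilon>"
proof (cases "K0 = {}")
  case True
  then show ?thesis by blast
next
  case False
  have "\<forall>s\<in>K0. \<exists>h. s h = f s \<and> (\<forall>\<phi>\<in>K0. \<phi> h < f \<phi> + \<epsilon>)" using step1[OF f ep] by blast
  then obtain H where H: "\<forall>s\<in>K0. s (H s) = f s \<and> (\<forall>\<phi>\<in>K0. \<phi> (H s) < f \<phi> + \<epsilon>)"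
    by (rule bchoice[elim_format]) blast
  have "\<forall>s. \<exists>V. open V \<and> V \<inter> K0 = {\<phi>. \<phi> (H s) - f \<phi> \<in> {- \<epsilon><..}} \<inter> K0"
    using open_piece[OF f open_greaterThan] by blast
  then obtain V where V: "\<And>s. open (V s)" "\<And>s. V s \<inter> K0 = {\<phi>. \<phi> (H s) - f \<phi> \<in> {- \<epsilon><..}} \<inter> K0"
    by metis
  have cov: "K0 \<subseteq> (\<Union>s\<in>K0. V s)"
  proof
    fix s assume s: "s \<in> K0"
    then have "s \<in> V s \<inter> K0" unfolding V(2) using H ep by auto
    then show "s \<in> (\<Union>s\<in>K0. V s)" using s by blast
  qed
  obtain T where T: "T \<subseteq> K0" "finite T" "K0 \<subseteq> (\<Union>s\<in>T. V s)"
    using compactE_image[OF K0_compact V(1) cov] by blast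
  have Tne: "T \<noteq> {}" using T(3) False by blast
  obtain h where h: "\<forall>\<phi>\<in>K0. \<phi> h = Max ((\<lambda>s. \<phi> (H s)) ` T)" using finite_max[OF T(2) Tne] by blast
  have "\<bar>\<phi> h - f \<phi>\<bar> < \<epsilon>" if p: "\<phi> \<in> K0" for \<phi>
  proof -
    obtain s where s: "s \<in> T" "\<phi> \<in> V s" using T(3) p by blast
    then have "\<phi> \<in> V s \<inter> K0" using p by blast
    then have 1: "\<phi> (H s) - f \<phi> > - \<epsilon>" unfolding V(2) by simp
    have "\<phi> (H s) \<le> Max ((\<lambda>s. \<phi> (H s)) ` T)" using T(2) s(1) by (intro Max_ge) auto
    moreover have "\<phi> h = Max ((\<lambda>s. \<phi> (H s)) ` T)" using h p by blast
    ultimately have 2: "\<phi> (H s) \<le> \<phi> h" by simp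
    have 3: "\<phi> h < f \<phi> + \<epsilon>"
    proof -
      have "\<forall>s'\<in>T. \<phi> (H s') < f \<phi> + \<epsilon>" using H T(1) p by blast
      then have "Max ((\<lambda>s'. \<phi> (H s')) ` T) < f \<phi> + \<epsilon>" using T(2) Tne by (simp add: Max_less_iff)
      moreover have "\<phi> h = Max ((\<lambda>s. \<phi> (H s)) ` T)" using h p by blast
      ultimately show ?thesis by simp
    qed
    show ?thesis using 1 2 3 by linarith
  qed
  then show ?thesis by blast
qed

lemma surj_rep:
  assumes f: "continuous_on K0 f"
  shows "\<exists>x. \<forall>\<phi>\<in>K0. \<phi> x = f \<phi>"
proof -
  have "\<forall>n. \<exists>h. \<forall>\<phi>\<in>K0. \<bar>\<phi> h - f \<phi>\<bar> < inverse (real (Suc n))"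
    using density[OF f] by simp
  then obtain X where X: "\<And>n \<phi>. \<phi> \<in> K0 \<Longrightarrow> \<bar>\<phi> (X n) - f \<phi>\<bar> < inverse (real (Suc n))"
    by metis
  have "Cauchy X"
  proof (rule CauchyI)
    fix \<epsilon> :: real assume ep: "\<epsilon> > 0"
    obtain M where M: "inverse (real (Suc M)) < \<epsilon> / 2" using reals_Archimedean[of "\<epsilon> / 2"] ep by auto
    have "norm (X m - X n) < \<epsilon>" if "m \<ge> M" "n \<ge> M" for m n
    proof -
      have im: "inverse (real (Suc m)) \<le> inverse (real (Suc M))" using that by (simp add: field_simps)
      have inn: "inverse (real (Suc n)) \<le> inverse (real (Suc M))" using that by (simp add: field_simps)
      have "norm (X m - X n) \<le> 2 * inverse (real (Suc M))"
      proof (rule norm_le_bound)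
        fix \<phi> assume p: "\<phi> \<in> K0"
        have "\<bar>\<phi> (X m - X n)\<bar> = \<bar>(\<phi> (X m) - f \<phi>) - (\<phi> (X n) - f \<phi>)\<bar>" using p by (simp add: hom_diff)
        also have "\<dots> \<le> \<bar>\<phi> (X m) - f \<phi>\<bar> + \<bar>\<phi> (X n) - f \<phi>\<bar>" by (rule abs_triangle_ineq4)
        also have "\<dots> \<le> 2 * inverse (real (Suc M))" using X[OF p, of m] X[OF p, of n] im inn by linarith
        finally show "\<bar>\<phi> (X m - X n)\<bar> \<le> 2 * inverse (real (Suc M))" .
      qed simp
      then show ?thesis using M by linarith
    qed
    then show "\<exists>M. \<forall>m\<ge>M. \<forall>n\<ge>M. norm (X m - X n) < \<epsilon>" by blast
  qed
  then obtain x where x: "X \<longlonglongrightarrow> x" using Cauchy_convergent_iff convergent_def by blast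
  have "\<phi> x = f \<phi>" if p: "\<phi> \<in> K0" for \<phi>
  proof (rule ccontr)
    assume "\<phi> x \<noteq> f \<phi>"
    then have d: "\<bar>\<phi> x - f \<phi>\<bar> > 0" by simp
    define d where "d = \<bar>\<phi> x - f \<phi>\<bar>"
    obtain N where N: "\<forall>n\<ge>N. norm (X n - x) < d / 2" using x d unfolding LIMSEQ_iff d_def
      by (meson half_gt_zero)
    obtain M where M: "inverse (real (Suc M)) < d / 2" using reals_Archimedean[of "d / 2"] d d_def by auto
    define n where "n = max N M"
    have 1: "norm (X n - x) < d / 2" using N n_def by simp
    have "inverse (real (Suc n)) \<le> inverse (real (Suc M))" unfolding n_def by (simp add: field_simps)
    then have 2: "\<bar>\<phi> (X n) - f \<phi>\<bar> < d / 2" using X[OF p, of n] M by linarith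
    have 3: "\<bar>\<phi> x - \<phi> (X n)\<bar> \<le> norm (X n - x)"
      using hom_bound[OF p, of "x - X n"] p by (simp add: hom_diff norm_minus_commute)
    have "d \<le> \<bar>\<phi> x - \<phi> (X n)\<bar> + \<bar>\<phi> (X n) - f \<phi>\<bar>" unfolding d_def by linarith
    then show False using 1 2 3 by linarith
  qed
  then show ?thesis by blast
qed

end




theorem mainTheorem14:
  assumes "AM_space TYPE('a::{banach, ordered_real_vector, lattice})"
    and "\<exists>S. finite S \<and> S \<subseteq> cball (0::'a) 1 \<and>
               cball (0::'a) 1 = closure (solid_convex_hull S)"
  shows "\<exists>(K :: ('a \<Rightarrow> real) topology) (\<Phi> :: 'a \<Rightarrow> ('a \<Rightarrow> real) \<Rightarrow> real).
           compact_space K \<and> Hausdorff_space K \<and> lattice_isometry_onto_CK \<Phi> K"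
proof -
  obtain S :: "'a set" where S: "finite S" "S \<subseteq> cball 0 1" "cball 0 1 = closure (solid_convex_hull S)"
    using assms(2) by blast
  obtain e :: 'a where e: "0 \<le> e" "\<forall>x. norm x \<le> 1 \<longleftrightarrow> labs x \<le> e"
    using get_unit[OF assms(1) S] by blast
  interpret kak e using e by unfold_locales auto
  define \<Phi> where "\<Phi> = (\<lambda>(x::'a) (\<phi>::'a \<Rightarrow> real). if \<phi> \<in> K0 then \<phi> x else 0)"
  define K where "K = top_of_set K0"
  have tK: "topspace K = K0" unfolding K_def by simp
  have inC: "\<Phi> x \<in> Cfun K" for x
  proof -
    have "continuous_on K0 (\<Phi> x)"
      by (rule continuous_on_cong[THEN iffD2, OF refl _ cont_ev[of K0 x]]) (simp add: \<Phi>_def)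
    then have "continuous_map K euclideanreal (\<Phi> x)" unfolding K_def
      by (simp add: continuous_map_iff_continuous)
    then show ?thesis unfolding Cfun_def tK by (simp add: \<Phi>_def)
  qed
  have img: "\<Phi> ` UNIV = Cfun K"
  proof
    show "\<Phi> ` UNIV \<subseteq> Cfun K" using inC by blast
    show "Cfun K \<subseteq> \<Phi> ` UNIV"
    proof
      fix f assume f: "f \<in> Cfun K"
      then have "continuous_map K euclideanreal f" and z: "\<forall>t. t \<notin> K0 \<longrightarrow> f t = 0"
        unfolding Cfun_def tK by auto
      then have "continuous_on K0 f" unfolding K_def by (simp add: continuous_map_iff_continuous)
      then obtain x where x: "\<forall>\<phi>\<in>K0. \<phi> x = f \<phi>" using surj_rep by blast
      have "\<Phi> x = f" unfolding \<Phi>_def using x z by (auto simp: fun_eq_iff)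
      then show "f \<in> \<Phi> ` UNIV" by blast
    qed
  qed
  have inj: "inj \<Phi>"
  proof (rule injI)
    fix x y assume eq: "\<Phi> x = \<Phi> y"
    have "norm (x - y) \<le> 0"
    proof (rule norm_le_bound)
      fix \<phi> assume p: "\<phi> \<in> K0"
      have "\<phi> x = \<phi> y" using fun_cong[OF eq, of \<phi>] p by (simp add: \<Phi>_def)
      then show "\<bar>\<phi> (x - y)\<bar> \<le> 0" using p by (simp add: hom_diff)
    qed simp
    then show "x = y" by simp
  qed
  have "lattice_isometry_onto_CK \<Phi> K"
    unfolding lattice_isometry_onto_CK_def
  proof (intro conjI allI)
    show "bij_betw \<Phi> UNIV (Cfun K)" unfolding bij_betw_def using inj img by blast
    fix x y show "\<Phi> (x + y) = (\<lambda>t. \<Phi> x t + \<Phi> y t)" by (auto simp: \<Phi>_def fun_eq_iff hom_add)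
  next
    fix c x show "\<Phi> (c *\<^sub>R x) = (\<lambda>t. c * \<Phi> x t)" by (auto simp: \<Phi>_def fun_eq_iff hom_scale)
  next
    fix x y show "\<Phi> (sup x y) = (\<lambda>t. max (\<Phi> x t) (\<Phi> y t))" by (auto simp: \<Phi>_def fun_eq_iff hom_sup)
  next
    fix x show "sup_norm K (\<Phi> x) = norm x" unfolding K_def \<Phi>_def by (rule norm_sup)
  qed
  moreover have "compact_space K" unfolding K_def by (rule K0_compact_space)
  moreover have "Hausdorff_space K" unfolding K_def by (rule K0_Hausdorff)
  ultimately show ?thesis by blast
qed



end
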